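(* Consider the system $\mathcal G$ (CT or DT) with $(A,C)$ detectable, a gain $L$ such that $A_{cl}=A-LC$ is Hurwitz (CT) or Schur (DT), and matrices $P\in\mathbb{R}^{m\times n}$ of full column rank $n$ and $Q\in\mathbb{R}^{m\times m}$ with $PA_{cl}=QP$ (and $\mu_\infty(Q)<0$ in CT, $\|Q\|_\infty<1$ in DT). Let $(\underline z_t,\overline z_t)$ be generated by the observer $\hat{\mathcal G}$ from any initial condition with $\underline z_0\le Px_0\le\overline z_0$. Then for all $t\in\mathbb{T}$, all admissible initial states $x_0\in[\underline x_0,\overline x_0]$ and all noise signals with $w_t\in[\underline w,\overline w]$, $v_t\in[\underline v,\overline v]$ for all $t$, the true state satisfies $\underline z_t\le Px_t\le \overline z_t$ and $$x_t\in \hat X^P_t\subseteq \hat X^I_t.$$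
   Context: System $\mathcal G$: $x_t^+ = Ax_t + Bu_t + Ww_t$, $y_t = Cx_t + Du_t + Vv_t$, $t\in\mathbb{T}$, with state $x_t\in\mathbb{R}^n$, output $y_t\in\mathbb{R}^l$, known input $u_t$, process noise $w_t\in[\underline w,\overline w]\subset\mathbb{R}^{n_w}$, measurement noise $v_t\in[\underline v,\overline v]\subset\mathbb{R}^{n_v}$, and unknown initial state $x_0\in[\underline x_0,\overline x_0]$; $u_t,y_t$ and all bounds are known. In continuous time (CT) $x_t^+=\dot x_t$ and $\mathbb{T}=\mathbb{R}_{\ge0}$; in discrete time (DT) $x_t^+=x_{t+1}$ and $\mathbb{T}=\{0,1,2,\dots\}$. Inequalities between vectors are entrywise. Notation: for a matrix $M$, $M^{\oplus}=\max(M,0)$ entrywise, $M^{\ominus}=M^{\oplus}-M$, $|M|=M^\oplus+M^\ominus$; for square $M$, $M^{\mathrm d}$ is its diagonal part and $M^{\mathrm{nd}}=M-M^{\mathrm d}$. Logarithmic norm $\mu_\infty(M)=\max_i(M_{ii}+\sum_{j\neq i}|M_{ij}|)$, induced norm $\|M\|_\infty=\max_i\sum_j|M_{ij}|$. Observer $\hat{\mathcal G}$: in CT set $Q^\uparrow = Q^{\mathrm d}+(Q^{\mathrm{nd}})^{\oplus}$, $Q^\downarrow=(Q^{\mathrm{nd}})^{\ominus}$ and $z^+=\dot z$; in DT set $Q^\uparrow=Q^\oplus$, $Q^\downarrow=Q^\ominus$ and $z_t^+=z_{t+1}$. Then $\underline z_t^+ = Q^\uparrow\underline z_t - Q^\downarrow\overline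 z_t + (PW)^\oplus\underline w - (PW)^\ominus\overline w + (PLV)^\ominus\underline v - (PLV)^\oplus\overline v + PLy_t + P(B-LD)u_t$, $\overline z_t^+ = Q^\uparrow\overline z_t - Q^\downarrow\underline z_t + (PW)^\oplus\overline w - (PW)^\ominus\underline w + (PLV)^\ominus\overline v - (PLV)^\oplus\underline v + PLy_t + P(B-LD)u_t$. Polytopic estimate: $\hat X^P_t=\{x\in\mathbb{R}^n:\ \underline z_t\le Px\le\overline z_t,\ \underline c_t\le Cx\le\overline c_t\}$ where $\underline c_t = y_t-Du_t-V^\oplus\overline v+V^\ominus\underline v$ and $\overline c_t = y_t-Du_t-V^\oplus\underline v+V^\ominus\overline v$. Interval estimate: let $\tilde P=\begin{bmatrix}P\\ C\end{bmatrix}$ (full column rank) with Moore–Penrose pseudoinverse $\tilde P^\dagger$ (so $\tilde P^\dagger\tilde P=I$), $\underline\zeta_t=\begin{bmatrix}\underline z_t\\ \underline c_t\end{bmatrix}$, $\overline\zeta_t=\begin{bmatrix}\overline z_t\\ \overline c_t\end{bmatrix}$, $\overline x_t=(\tilde P^\dagger)^\oplus\overline\zeta_t-(\tilde P^\dagger)^\ominus\underline\zeta_t$, $\underline x_t=(\tilde P^\dagger)^\oplus\underline\zeta_t-(\tilde P^\dagger)^\ominus\overline\zeta_t$, and $\hat X^I_t=\{x:\underline x_t\le x\le\overline x_t\}$. *)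

theory Defs
  imports "HOL-Analysis.Analysis"
begin

(* Time domain: continuous time (CT) or discrete time (DT). Time is real-valued;
   in DT the time set is {0,1,2,...} embedded in the reals. *)
datatype time_domain = CT | DT

definition time_set :: "time_domain \<Rightarrow> real set" where
  "time_set td = (case td of CT \<Rightarrow> {0..} | DT \<Rightarrow> range real)"

(* x_t^+ = f t : derivative (CT, one-sided at 0) or next value (DT) *)
definition evolves :: "time_domain \<Rightarrow> (real \<Rightarrow> 'a::real_normed_vector) \<Rightarrow> (real \<Rightarrow> 'a) \<Rightarrow> bool" where
  "evolves td x f = (case td of
      CT \<Rightarrow> (\<forall>t\<ge>0. (x has_vector_derivative f t) (at t within {0..}))
    | DT \<Rightarrow> (\<forall>k::nat. x (real k + 1) = f (real k)))"

(* entrywise positive / negative parts, diagonal and off-diagonal parts *)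
definition mpos :: "real^'n^'m \<Rightarrow> real^'n^'m" where
  "mpos M = (\<chi> i j. max (M$i$j) 0)"

definition mneg :: "real^'n^'m \<Rightarrow> real^'n^'m" where
  "mneg M = mpos M - M"

definition mdiag :: "real^'n^'n \<Rightarrow> real^'n^'n" where
  "mdiag M = (\<chi> i j. if i = j then M$i$j else 0)"

definition mnd :: "real^'n^'n \<Rightarrow> real^'n^'n" where
  "mnd M = M - mdiag M"

definition Qup :: "time_domain \<Rightarrow> real^'m^'m \<Rightarrow> real^'m^'m" where
  "Qup td Q = (case td of CT \<Rightarrow> mdiag Q + mpos (mnd Q) | DT \<Rightarrow> mpos Q)"

definition Qdown :: "time_domain \<Rightarrow> real^'m^'m \<Rightarrow> real^'m^'m" where
  "Qdown td Q = (case td of CT \<Rightarrow> mneg (mnd Q) | DT \<Rightarrow> mneg Q)"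

(* logarithmic infinity norm and induced infinity norm *)
definition mu_inf :: "real^'n^'n \<Rightarrow> real" where
  "mu_inf M = Max (range (\<lambda>i. M$i$i + (\<Sum>j\<in>UNIV - {i}. \<bar>M$i$j\<bar>)))"

definition norm_inf :: "real^'n^'m \<Rightarrow> real" where
  "norm_inf M = Max (range (\<lambda>i. \<Sum>j\<in>UNIV. \<bar>M$i$j\<bar>))"

definition contractive :: "time_domain \<Rightarrow> real^'m^'m \<Rightarrow> bool" where
  "contractive td Q = (case td of CT \<Rightarrow> mu_inf Q < 0 | DT \<Rightarrow> norm_inf Q < 1)"

(* complex eigenvalues of a real matrix *)
definition cmat :: "real^'n^'m \<Rightarrow> complex^'n^'m" where
  "cmat M = (\<chi> i j. complex_of_real (M$i$j))"

definition is_eigenpair :: "real^'n^'n \<Rightarrow> complex \<Rightarrow> complex^'n \<Rightarrow> bool" where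
  "is_eigenpair A e v = (v \<noteq> 0 \<and> cmat A *v v = e *s v)"

(* eigenvalue in the closed unstable region *)
definition unstable_eig :: "time_domain \<Rightarrow> complex \<Rightarrow> bool" where
  "unstable_eig td e = (case td of CT \<Rightarrow> Re e \<ge> 0 | DT \<Rightarrow> cmod e \<ge> 1)"

(* Hurwitz (CT) / Schur (DT) *)
definition stable_mat :: "time_domain \<Rightarrow> real^'n^'n \<Rightarrow> bool" where
  "stable_mat td A = (\<forall>e v. is_eigenpair A e v \<longrightarrow> \<not> unstable_eig td e)"

(* detectability of (A,C), PBH test *)
definition detectable :: "time_domain \<Rightarrow> real^'n^'n \<Rightarrow> real^'n^'l \<Rightarrow> bool" where
  "detectable td A C = (\<forall>e v. is_eigenpair A e v \<and> unstable_eig td e \<longrightarrow> cmat C *v v \<noteq> 0)"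

(* Moore-Penrose pseudoinverse *)
definition pinv :: "real^'n^'m \<Rightarrow> real^'m^'n" where
  "pinv M = (THE X. M ** X ** M = M \<and> X ** M ** X = X \<and>
                    transpose (M ** X) = M ** X \<and> transpose (X ** M) = X ** M)"

(* stacking [P; C] and [a; b] *)
definition vstack :: "real^'n^'m \<Rightarrow> real^'n^'l \<Rightarrow> real^'n^('m + 'l)" where
  "vstack P C = (\<chi> k. case k of Inl i \<Rightarrow> P$i | Inr j \<Rightarrow> C$j)"

definition vcat :: "real^'m \<Rightarrow> real^'l \<Rightarrow> real^('m + 'l)" where
  "vcat a b = (\<chi> k. case k of Inl i \<Rightarrow> a$i | Inr j \<Rightarrow> b$j)"

(* measurement-derived bounds on C x_t *)
definition c_lo :: "real^'n^'l \<Rightarrow> real^'p^'l \<Rightarrow> real^'v^'l \<Rightarrow> real^'v \<Rightarrow> real^'v \<Rightarrow> real^'l \<Rightarrow> real^'p \<Rightarrow> real^'l" where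
  "c_lo C D V v_lo v_hi y u = y - D *v u - mpos V *v v_hi + mneg V *v v_lo"

definition c_hi :: "real^'n^'l \<Rightarrow> real^'p^'l \<Rightarrow> real^'v^'l \<Rightarrow> real^'v \<Rightarrow> real^'v \<Rightarrow> real^'l \<Rightarrow> real^'p \<Rightarrow> real^'l" where
  "c_hi C D V v_lo v_hi y u = y - D *v u - mpos V *v v_lo + mneg V *v v_hi"

(* polytopic estimate X^P *)
definition XP :: "real^'n^'m \<Rightarrow> real^'n^'l \<Rightarrow> real^'m \<Rightarrow> real^'m \<Rightarrow> real^'l \<Rightarrow> real^'l \<Rightarrow> (real^'n) set" where
  "XP P C zl zh cl ch = {x. zl \<le> P *v x \<and> P *v x \<le> zh \<and> cl \<le> C *v x \<and> C *v x \<le> ch}"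

(* interval estimate X^I *)
definition XI :: "real^'n^'m \<Rightarrow> real^'n^'l \<Rightarrow> real^'m \<Rightarrow> real^'m \<Rightarrow> real^'l \<Rightarrow> real^'l \<Rightarrow> (real^'n) set" where
  "XI P C zl zh cl ch =
     (let Pt = pinv (vstack P C); zeta_lo = vcat zl cl; zeta_hi = vcat zh ch;
          x_hi = mpos Pt *v zeta_hi - mneg Pt *v zeta_lo;
          x_lo = mpos Pt *v zeta_lo - mneg Pt *v zeta_hi
      in {x. x_lo \<le> x \<and> x \<le> x_hi})"

end

theory Submission imports Defs begin

lemma mpos_nonneg: "mpos M $ i $ j \<ge> 0"
  by (simp add: mpos_def)

lemma mneg_nonneg: "mneg M $ i $ j \<ge> 0"
  by (simp add: mneg_def mpos_def)

lemma mpos_mneg: "mpos M - mneg M = M"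
  by (simp add: mneg_def)

lemma nonneg_mv_mono:
  fixes M :: "real^'n^'m"
  assumes "\<And>i j. M $ i $ j \<ge> 0" "a \<le> b"
  shows "M *v a \<le> M *v b"
proof -
  have "(M *v a) $ i \<le> (M *v b) $ i" for i
    unfolding matrix_vector_mult_def using assms
    by (auto intro!: sum_mono mult_left_mono simp: less_eq_vec_def)
  then show ?thesis by (simp add: less_eq_vec_def)
qed

lemma nonneg_mv_nonneg:
  fixes M :: "real^'n^'m"
  assumes "\<And>i j. M $ i $ j \<ge> 0" "0 \<le> b"
  shows "0 \<le> M *v b"
  using nonneg_mv_mono[OF assms] by simp

lemma interval_upper:
  fixes M :: "real^'n^'m"
  assumes "lo \<le> z" "z \<le> hi"
  shows "M *v z \<le> mpos M *v hi - mneg M *v lo"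
proof -
  have "M *v z = mpos M *v z - mneg M *v z"
    by (metis mpos_mneg matrix_vector_mult_diff_rdistrib)
  moreover have "mpos M *v z \<le> mpos M *v hi"
    by (rule nonneg_mv_mono[OF mpos_nonneg assms(2)])
  moreover have "mneg M *v lo \<le> mneg M *v z"
    by (rule nonneg_mv_mono[OF mneg_nonneg assms(1)])
  ultimately show ?thesis by (simp add: diff_mono)
qed

lemma interval_lower:
  fixes M :: "real^'n^'m"
  assumes "lo \<le> z" "z \<le> hi"
  shows "mpos M *v lo - mneg M *v hi \<le> M *v z"
proof -
  have "M *v z = mpos M *v z - mneg M *v z"
    by (metis mpos_mneg matrix_vector_mult_diff_rdistrib)
  moreover have "mpos M *v lo \<le> mpos M *v z"
    by (rule nonneg_mv_mono[OF mpos_nonneg assms(1)])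
  moreover have "mneg M *v z \<le> mneg M *v hi"
    by (rule nonneg_mv_mono[OF mneg_nonneg assms(2)])
  ultimately show ?thesis by (simp add: diff_mono)
qed

lemma Qup_Qdown: "Qup td Q - Qdown td Q = Q"
  by (cases td) (simp_all add: Qup_def Qdown_def mneg_def mnd_def)

lemma Qdown_nonneg: "Qdown td Q $ i $ j \<ge> 0"
  by (cases td) (simp_all add: Qdown_def mneg_nonneg)

lemma Qup_offdiag: "i \<noteq> j \<Longrightarrow> Qup td Q $ i $ j \<ge> 0"
  by (cases td) (simp_all add: Qup_def mpos_def mdiag_def)

lemma Qup_DT: "Qup DT Q $ i $ j \<ge> 0"
  by (simp add: Qup_def mpos_def)

(* pseudo-inverse *)
lemma pinv_left:
  fixes M :: "real^'n^'k"
  assumes inj: "inj ((*v) M)"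
  shows "pinv M ** M = mat 1"
proof -
  let ?G = "transpose M ** M"
  have ker: "\<forall>x. ?G *v x = 0 \<longrightarrow> x = 0"
  proof (intro allI impI)
    fix x assume "?G *v x = 0"
    then have "inner x (transpose M *v (M *v x)) = 0"
      by (simp add: matrix_vector_mul_assoc)
    then have "inner (M *v x) (M *v x) = 0"
      by (metis dot_lmul_matrix vector_transpose_matrix transpose_transpose)
    then have "M *v x = M *v 0" by simp
    then show "x = 0" using inj by (meson injD)
  qed
  then obtain B where B: "B ** ?G = mat 1"
    using matrix_left_invertible_ker by blast
  then have B2: "?G ** B = mat 1" using matrix_left_right_inverse by blast
  have Bsym: "transpose B = B"
  proof -
    have "transpose B ** ?G = mat 1"
      using B2 by (metis matrix_transpose_mul transpose_mat transpose_transpose)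
    then have "transpose B = (transpose B ** ?G) ** B"
      by (metis B2 matrix_mul_assoc matrix_mul_rid)
    then show ?thesis using \<open>transpose B ** ?G = mat 1\<close> by simp
  qed
  define X0 where "X0 = B ** transpose M"
  have X0M: "X0 ** M = mat 1" using B by (simp add: X0_def matrix_mul_assoc)
  let ?P = "\<lambda>X. M ** X ** M = M \<and> X ** M ** X = X \<and>
                    transpose (M ** X) = M ** X \<and> transpose (X ** M) = X ** M"
  have "?P X0"
  proof (intro conjI)
    show "M ** X0 ** M = M" using X0M by (simp add: matrix_mul_assoc[symmetric])
    show "X0 ** M ** X0 = X0" using X0M by simp
    show "transpose (M ** X0) = M ** X0"
      by (simp add: X0_def matrix_transpose_mul Bsym matrix_mul_assoc)
    show "transpose (X0 ** M) = X0 ** M" using X0M by simp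
  qed
  moreover have "X = X0" if "?P X" for X
  proof -
    from that have h1: "M ** X ** M = M" and h3: "transpose (M ** X) = M ** X" by auto
    have "transpose M = transpose (M ** X ** M)" using h1 by simp
    also have "\<dots> = transpose M ** transpose (M ** X)" by (simp add: matrix_transpose_mul)
    also have "\<dots> = ?G ** X" using h3 by (simp add: matrix_mul_assoc)
    finally have "transpose M = ?G ** X" .
    then have "B ** transpose M = (B ** ?G) ** X" by (metis matrix_mul_assoc)
    then show ?thesis using B by (simp add: X0_def)
  qed
  ultimately have "pinv M = X0"
    unfolding pinv_def by (rule the_equality)
  then show ?thesis using X0M by simp
qed


lemma pos_invariance:
  fixes g g' :: "'k::finite \<Rightarrow> real \<Rightarrow> real" and R :: real
  assumes deriv: "\<And>k t. t \<ge> 0 \<Longrightarrow> (g k has_real_derivative g' k t) (at t within {0..})"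
    and R: "R \<ge> 0"
    and ineq: "\<And>k t c. t \<ge> 0 \<Longrightarrow> c \<ge> 0 \<Longrightarrow> (\<forall>j. g j t \<ge> -c) \<Longrightarrow> g k t = -c \<Longrightarrow> g' k t \<ge> -R*c"
    and init: "\<And>k. g k 0 \<ge> 0"
    and t: "t \<ge> 0"
  shows "g k t \<ge> 0"
proof -
  define l where "l = R + 1"
  have l: "l > 0" using R by (simp add: l_def)
  have main: "g k t + e * exp (l * t) > 0" if e: "e > 0" and t: "t \<ge> 0" for e t k
  proof (rule ccontr)
    assume "\<not> g k t + e * exp (l * t) > 0"
    define h where "h = (\<lambda>k t. g k t + e * exp (l * t))"
    have hd: "(h k has_real_derivative g' k t + e * (l * exp (l * t))) (at t within {0..})"
      if "t \<ge> 0" for k t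
      unfolding h_def using deriv[OF that]
      by (auto intro!: derivative_eq_intros)
    have cont: "continuous_on {0..} (h k)" for k
      using hd by (meson DERIV_continuous atLeast_iff continuous_on_eq_continuous_within)
    define S where "S = {t. t \<ge> 0 \<and> (\<exists>k. h k t \<le> 0)}"
    have S_eq: "S = (\<Union>k. {0..} \<inter> h k -` {..0})" by (auto simp: S_def)
    have closedS: "closed S" unfolding S_eq
      by (intro closed_UN finite_UNIV ballI continuous_closed_preimage cont) auto
    have "t \<in> S" using \<open>\<not> _\<close> t unfolding S_def h_def by (auto intro!: exI[of _ k])
    then have Sne: "S \<noteq> {}" by auto
    have bdd: "bdd_below S" by (rule bdd_belowI[of _ 0]) (auto simp: S_def)
    define s where "s = Inf S"
    have sS: "s \<in> S" unfolding s_def by (rule closed_contains_Inf[OF Sne bdd closedS])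
    then obtain k0 where s0: "s \<ge> 0" and hk0: "h k0 s \<le> 0" by (auto simp: S_def)
    have before: "h j r > 0" if "0 \<le> r" "r < s" for j r
    proof (rule ccontr)
      assume "\<not> h j r > 0"
      then have "r \<in> S" using that by (auto simp: S_def intro!: exI[of _ j])
      then have "s \<le> r" unfolding s_def using bdd by (rule cInf_lower)
      then show False using that by simp
    qed
    have "s \<noteq> 0"
    proof
      assume "s = 0"
      then have "h k0 0 \<le> 0" using hk0 by simp
      moreover have "h k0 0 > 0" using init[of k0] e by (simp add: h_def)
      ultimately show False by simp
    qed
    then have spos: "s > 0" using s0 by simp
    have atS: "h j s \<ge> 0" for j
    proof -
      have cl: "closed ({0..s} \<inter> h j -` {0..})"
        by (intro continuous_closed_preimage continuous_on_subset[OF cont[of j]]) auto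
      have "{0..<s} \<subseteq> {0..s} \<inter> h j -` {0..}"
        using before by (force intro: less_imp_le)
      then have "closure {0..<s} \<subseteq> {0..s} \<inter> h j -` {0..}"
        using cl by (rule closure_minimal)
      moreover have "s \<in> closure {0..<s}" using spos by simp
      ultimately have "s \<in> {0..s} \<inter> h j -` {0..}" by blast
      then show ?thesis by simp
    qed
    define c where "c = e * exp (l * s)"
    have cpos: "c > 0" using e by (simp add: c_def)
    have gj: "\<forall>j. g j s \<ge> -c" using atS unfolding h_def c_def by (metis add.commute le_add_same_cancel1 minus_add_cancel add_le_cancel_left neg_le_iff_le diff_le_eq uminus_add_conv_diff)
    have gk: "g k0 s = -c" using atS[of k0] hk0 by (auto simp: h_def c_def)
    have "g' k0 s \<ge> -R*c" using ineq[OF s0 _ gj gk] cpos by simp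
    then have dpos: "g' k0 s + e * (l * exp (l * s)) > 0"
      using cpos by (simp add: c_def l_def algebra_simps)
    obtain d where d: "d > 0" and dd: "\<forall>r>0. s - r \<in> {0..} \<longrightarrow> r < d \<longrightarrow> h k0 (s - r) < h k0 s"
      using has_real_derivative_pos_inc_left[OF hd[OF s0] dpos] by blast
    define r where "r = min (d/2) (s/2)"
    have r: "r > 0" "r < d" "s - r \<ge> 0" "s - r < s" using d spos by (auto simp: r_def)
    have "h k0 (s - r) < h k0 s" using dd r by auto
    moreover have "h k0 (s - r) > 0" using before r by auto
    ultimately show False using hk0 by simp
  qed
  show ?thesis
  proof (rule ccontr)
    assume neg: "\<not> g k t \<ge> 0"
    define e where "e = - g k t / (2 * exp (l * t))"
    have "e > 0" using neg using neg by (simp add: e_def divide_neg_pos)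
    have "e * exp (l * t) = - g k t / 2" by (simp add: e_def)
    then show False using main[OF \<open>e > 0\<close> t, of k] neg by simp
  qed
qed


lemma vstack_mv: "vstack P C *v x = vcat (P *v x) (C *v x)"
  by (simp add: vec_eq_iff vstack_def vcat_def matrix_vector_mult_def split: sum.split)

lemma vcat_le: "vcat a b \<le> vcat c d \<longleftrightarrow> a \<le> c \<and> b \<le> d"
  by (auto simp: less_eq_vec_def vcat_def split: sum.split)

lemma XP_XI:
  fixes P :: "real^'n^'m" and C :: "real^'n^'l"
  assumes inj: "inj ((*v) P)"
  shows "XP P C zl zh cl ch \<subseteq> XI P C zl zh cl ch"
proof
  fix x assume "x \<in> XP P C zl zh cl ch"
  then have b: "vcat zl cl \<le> vstack P C *v x" "vstack P C *v x \<le> vcat zh ch"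
    by (auto simp: XP_def vstack_mv vcat_le)
  have injM: "inj ((*v) (vstack P C))"
  proof (rule injI)
    fix a b assume "vstack P C *v a = vstack P C *v b"
    then have "P *v a = P *v b"
      by (simp add: vstack_mv vec_eq_iff vcat_def) (metis sum.case(1))
    then show "a = b" using inj by (meson injD)
  qed
  have "x = pinv (vstack P C) *v (vstack P C *v x)"
    by (simp add: matrix_vector_mul_assoc pinv_left[OF injM])
  then show "x \<in> XI P C zl zh cl ch"
    unfolding XI_def Let_def using interval_upper[OF b] interval_lower[OF b]
    by (metis (mono_tags, lifting) mem_Collect_eq)
qed

lemma metz_bound:
  fixes U D :: "real^'m^'m"
  assumes "\<And>i j. i \<noteq> j \<Longrightarrow> U$i$j \<ge> 0" "\<And>i j. D$i$j \<ge> 0"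
    "\<forall>j. a$j \<ge> -c" "\<forall>j. b$j \<ge> -c" "a$i = -c" "c \<ge> 0"
  shows "(U *v a)$i + (D *v b)$i \<ge> -(\<Sum>j\<in>UNIV. \<bar>U$i$j\<bar> + \<bar>D$i$j\<bar>) * c"
proof -
  have 1: "U$i$j * a$j \<ge> - (\<bar>U$i$j\<bar> * c)" for j
  proof (cases "i = j")
    case True then show ?thesis using assms by (simp add: abs_mult_pos)
  next
    case False
    then have "U$i$j \<ge> 0" using assms by auto
    then show ?thesis using assms(3) by (simp add: mult_left_mono) (metis minus_mult_right mult_left_mono)
  qed
  have 2: "D$i$j * b$j \<ge> - (\<bar>D$i$j\<bar> * c)" for j
    using assms(2)[of i j] assms(4) by simp (metis minus_mult_right mult_left_mono)
  have "(U *v a)$i + (D *v b)$i = (\<Sum>j\<in>UNIV. U$i$j * a$j + D$i$j * b$j)"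
    by (simp add: matrix_vector_mult_def sum.distrib)
  also have "\<dots> \<ge> (\<Sum>j\<in>UNIV. - (\<bar>U$i$j\<bar> * c) - (\<bar>D$i$j\<bar> * c))"
    by (intro sum_mono) (use 1 2 in \<open>smt\<close>)
  also have "(\<Sum>j\<in>UNIV. - (\<bar>U$i$j\<bar> * c) - (\<bar>D$i$j\<bar> * c)) = (\<Sum>j\<in>UNIV. - ((\<bar>U$i$j\<bar> + \<bar>D$i$j\<bar>) * c))"
    by (intro sum.cong refl) (simp add: algebra_simps)
  also have "\<dots> = -(\<Sum>j\<in>UNIV. \<bar>U$i$j\<bar> + \<bar>D$i$j\<bar>) * c"
    by (simp only: sum_negf sum_distrib_right[symmetric] mult_minus_left)
  finally show ?thesis .
qed

lemma key_id:
  fixes P :: "real^'n^'m"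
  assumes PA: "P ** A = Q ** P + P ** L ** C" and y: "y = C *v x + D *v u + V *v v"
    and QQ: "Qu - Qd = Q"
  shows "P *v (A *v x + B *v u + W *v w) - (Qu *v zl - Qd *v zh + a1 - a2 + b1 - b2 + (P ** L) *v y + (P ** (B - L ** D)) *v u)
     = Qu *v (P *v x - zl) + Qd *v (zh - P *v x) + ((P ** W) *v w - (a1 - a2)) + ((b2 - b1) - (P ** L ** V) *v v)"
proof -
  have hA: "P *v (A *v x) = Qu *v (P *v x) - Qd *v (P *v x) + P *v (L *v (C *v x))"
  proof -
    have "P *v (A *v x) = (P ** A) *v x" by (simp add: matrix_vector_mul_assoc)
    also have "\<dots> = (Q ** P) *v x + (P ** L ** C) *v x" by (metis PA matrix_vector_mult_add_rdistrib)
    also have "\<dots> = Q *v (P *v x) + P *v (L *v (C *v x))" by (simp add: matrix_vector_mul_assoc matrix_mul_assoc)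
    finally show ?thesis by (simp add: QQ[symmetric] matrix_vector_mult_diff_rdistrib)
  qed
  show ?thesis
    by (simp add: y hA matrix_vector_mul_assoc[symmetric] algebra_simps)
qed


lemma key_id2:
  fixes P :: "real^'n^'m"
  assumes PA: "P ** A = Q ** P + P ** L ** C" and y: "y = C *v x + D *v u + V *v v"
    and QQ: "Qu - Qd = Q"
  shows "(Qu *v zh - Qd *v zl + a1 - a2 + b1 - b2 + (P ** L) *v y + (P ** (B - L ** D)) *v u) - P *v (A *v x + B *v u + W *v w)
     = Qu *v (zh - P *v x) + Qd *v (P *v x - zl) + ((a1 - a2) - (P ** W) *v w) + ((P ** L ** V) *v v - (b2 - b1))"
proof -
  have "P *v (A *v x + B *v u + W *v w) - (Qu *v zh - Qd *v zl + a1 - a2 + b1 - b2 + (P ** L) *v y + (P ** (B - L ** D)) *v u)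
     = Qu *v (P *v x - zh) + Qd *v (zl - P *v x) + ((P ** W) *v w - (a1 - a2)) + ((b2 - b1) - (P ** L ** V) *v v)"
    by (rule key_id[OF PA y QQ])
  then show ?thesis
    by (simp add: algebra_simps)
qed

lemma vec_nonneg_iff: "(0::real^'n) \<le> a \<longleftrightarrow> (\<forall>i. a $ i \<ge> 0)"
  by (simp add: less_eq_vec_def)

lemma vec_sub_nonneg: "(0::real^'n) \<le> a - b \<longleftrightarrow> b \<le> a"
  by (simp add: less_eq_vec_def)


theorem theorem2:
  fixes td :: time_domain
    and A :: "real^'n^'n" and B :: "real^'p^'n" and W :: "real^'w^'n"
    and C :: "real^'n^'l" and D :: "real^'p^'l" and V :: "real^'v^'l"
    and L :: "real^'l^'n" and P :: "real^'n^'m" and Q :: "real^'m^'m"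
    and x0_lo x0_hi :: "real^'n" and w_lo w_hi :: "real^'w" and v_lo v_hi :: "real^'v"
    and x :: "real \<Rightarrow> real^'n" and u :: "real \<Rightarrow> real^'p" and y :: "real \<Rightarrow> real^'l"
    and w :: "real \<Rightarrow> real^'w" and v :: "real \<Rightarrow> real^'v"
    and z_lo z_hi :: "real \<Rightarrow> real^'m"
  assumes det: "detectable td A C"
    and stab: "stable_mat td (A - L ** C)"
    and rankP: "rank P = CARD('n)"
    and PQ: "P ** (A - L ** C) = Q ** P"
    and contr: "contractive td Q"
    and x0: "x0_lo \<le> x 0" "x 0 \<le> x0_hi"
    and wb: "\<forall>t\<in>time_set td. w_lo \<le> w t \<and> w t \<le> w_hi"
    and vb: "\<forall>t\<in>time_set td. v_lo \<le> v t \<and> v t \<le> v_hi"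
    and sys: "evolves td x (\<lambda>t. A *v x t + B *v u t + W *v w t)"
    and outp: "\<forall>t\<in>time_set td. y t = C *v x t + D *v u t + V *v v t"
    and z0: "z_lo 0 \<le> P *v x 0" "P *v x 0 \<le> z_hi 0"
    and obs_lo: "evolves td z_lo (\<lambda>t. Qup td Q *v z_lo t - Qdown td Q *v z_hi t
                   + mpos (P ** W) *v w_lo - mneg (P ** W) *v w_hi
                   + mneg (P ** L ** V) *v v_lo - mpos (P ** L ** V) *v v_hi
                   + (P ** L) *v y t + (P ** (B - L ** D)) *v u t)"
    and obs_hi: "evolves td z_hi (\<lambda>t. Qup td Q *v z_hi t - Qdown td Q *v z_lo t
                   + mpos (P ** W) *v w_hi - mneg (P ** W) *v w_lo
                   + mneg (P ** L ** V) *v v_hi - mpos (P ** L ** V) *v v_lo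
                   + (P ** L) *v y t + (P ** (B - L ** D)) *v u t)"
  shows "\<forall>t\<in>time_set td.
           z_lo t \<le> P *v x t \<and> P *v x t \<le> z_hi t \<and>
           x t \<in> XP P C (z_lo t) (z_hi t) (c_lo C D V v_lo v_hi (y t) (u t)) (c_hi C D V v_lo v_hi (y t) (u t)) \<and>
           XP P C (z_lo t) (z_hi t) (c_lo C D V v_lo v_hi (y t) (u t)) (c_hi C D V v_lo v_hi (y t) (u t))
             \<subseteq> XI P C (z_lo t) (z_hi t) (c_lo C D V v_lo v_hi (y t) (u t)) (c_hi C D V v_lo v_hi (y t) (u t))"
proof -
  define Fx where "Fx = (\<lambda>t. A *v x t + B *v u t + W *v w t)"
  define Flo where "Flo = (\<lambda>t. Qup td Q *v z_lo t - Qdown td Q *v z_hi t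
                   + mpos (P ** W) *v w_lo - mneg (P ** W) *v w_hi
                   + mneg (P ** L ** V) *v v_lo - mpos (P ** L ** V) *v v_hi
                   + (P ** L) *v y t + (P ** (B - L ** D)) *v u t)"
  define Fhi where "Fhi = (\<lambda>t. Qup td Q *v z_hi t - Qdown td Q *v z_lo t
                   + mpos (P ** W) *v w_hi - mneg (P ** W) *v w_lo
                   + mneg (P ** L ** V) *v v_hi - mpos (P ** L ** V) *v v_lo
                   + (P ** L) *v y t + (P ** (B - L ** D)) *v u t)"
  define rlo where "rlo = (\<lambda>t. ((P ** W) *v w t - (mpos (P ** W) *v w_lo - mneg (P ** W) *v w_hi))
       + ((mpos (P ** L ** V) *v v_hi - mneg (P ** L ** V) *v v_lo) - (P ** L ** V) *v v t))"
  define rhi where "rhi = (\<lambda>t. ((mpos (P ** W) *v w_hi - mneg (P ** W) *v w_lo) - (P ** W) *v w t)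
       + ((P ** L ** V) *v v t - (mpos (P ** L ** V) *v v_lo - mneg (P ** L ** V) *v v_hi)))"
  define elo where "elo = (\<lambda>t. P *v x t - z_lo t)"
  define ehi where "ehi = (\<lambda>t. z_hi t - P *v x t)"
  have sys': "evolves td x Fx" using sys unfolding Fx_def .
  have lo': "evolves td z_lo Flo" using obs_lo unfolding Flo_def .
  have hi': "evolves td z_hi Fhi" using obs_hi unfolding Fhi_def .
  have PA: "P ** A = Q ** P + P ** L ** C"
  proof -
    have "P ** (A - L ** C) = P ** A - P ** (L ** C)"
      by (simp add: matrix_matrix_mult_def vec_eq_iff sum_subtractf right_diff_distrib)
    then show ?thesis using PQ by (simp add: matrix_mul_assoc algebra_simps)
  qed
  have rlo_nn: "0 \<le> rlo t" if "t \<in> time_set td" for t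
  proof -
    have w1: "w_lo \<le> w t" "w t \<le> w_hi" and v1: "v_lo \<le> v t" "v t \<le> v_hi"
      using wb vb that by auto
    show ?thesis unfolding rlo_def
      using interval_lower[OF w1, of "P ** W"] interval_upper[OF v1, of "P ** L ** V"]
      by (simp add: less_eq_vec_def add_nonneg_nonneg)
  qed
  have rhi_nn: "0 \<le> rhi t" if "t \<in> time_set td" for t
  proof -
    have w1: "w_lo \<le> w t" "w t \<le> w_hi" and v1: "v_lo \<le> v t" "v t \<le> v_hi"
      using wb vb that by auto
    show ?thesis unfolding rhi_def
      using interval_upper[OF w1, of "P ** W"] interval_lower[OF v1, of "P ** L ** V"]
      by (simp add: less_eq_vec_def add_nonneg_nonneg)
  qed
  have idlo: "P *v Fx t - Flo t = Qup td Q *v elo t + Qdown td Q *v ehi t + rlo t"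
    if "t \<in> time_set td" for t
    unfolding Fx_def Flo_def elo_def ehi_def rlo_def
    using key_id[OF PA outp[rule_format, OF that] Qup_Qdown] by (simp only: add.assoc)
  have idhi: "Fhi t - P *v Fx t = Qup td Q *v ehi t + Qdown td Q *v elo t + rhi t"
    if "t \<in> time_set td" for t
    unfolding Fx_def Fhi_def elo_def ehi_def rhi_def
    using key_id2[OF PA outp[rule_format, OF that] Qup_Qdown] by (simp only: add.assoc)
  have init: "0 \<le> elo 0" "0 \<le> ehi 0"
    using z0 by (simp_all add: elo_def ehi_def vec_sub_nonneg)
  have nonneg: "0 \<le> elo t \<and> 0 \<le> ehi t" if "t \<in> time_set td" for t
  proof (cases td)
    case DT
    have "0 \<le> elo (real k) \<and> 0 \<le> ehi (real k)" for k
    proof (induction k)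
      case 0 then show ?case using init by simp
    next
      case (Suc k)
      have ts: "real k \<in> time_set td" using DT by (simp add: time_set_def)
      have "elo (real (Suc k)) = P *v Fx (real k) - Flo (real k)"
        using sys' lo' DT by (simp add: evolves_def elo_def add.commute)
      also have "\<dots> = Qup td Q *v elo (real k) + Qdown td Q *v ehi (real k) + rlo (real k)"
        by (rule idlo[OF ts])
      finally have 1: "elo (real (Suc k)) = \<dots>" .
      have "ehi (real (Suc k)) = Fhi (real k) - P *v Fx (real k)"
        using sys' hi' DT by (simp add: evolves_def ehi_def add.commute)
      also have "\<dots> = Qup td Q *v ehi (real k) + Qdown td Q *v elo (real k) + rhi (real k)"
        by (rule idhi[OF ts])
      finally have 2: "ehi (real (Suc k)) = \<dots>" .
      have qu: "Qup td Q $ i $ j \<ge> 0" for i j using DT Qup_DT by simp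
      show ?case unfolding 1 2
        using Suc.IH rlo_nn[OF ts] rhi_nn[OF ts]
          nonneg_mv_nonneg[of "Qup td Q", OF qu] nonneg_mv_nonneg[of "Qdown td Q", OF Qdown_nonneg]
        by (simp add: add_nonneg_nonneg)
    qed
    then show ?thesis using that DT by (auto simp: time_set_def)
  next
    case CT
    define g where "g = (\<lambda>(k::bool \<times> 'm) t. if fst k then elo t $ snd k else ehi t $ snd k)"
    define g' where "g' = (\<lambda>(k::bool \<times> 'm) t. if fst k then (P *v Fx t - Flo t) $ snd k else (Fhi t - P *v Fx t) $ snd k)"
    define R where "R = (\<Sum>i\<in>UNIV. \<Sum>j\<in>UNIV. \<bar>Qup td Q $ i $ j\<bar> + \<bar>Qdown td Q $ i $ j\<bar>)"
    have ts: "time_set td = {0..}" using CT by (simp add: time_set_def)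
    have dx: "(x has_vector_derivative Fx t) (at t within {0..})"
      and dlo: "(z_lo has_vector_derivative Flo t) (at t within {0..})"
      and dhi: "(z_hi has_vector_derivative Fhi t) (at t within {0..})" if "t \<ge> 0" for t
      using sys' lo' hi' CT that by (auto simp: evolves_def)
    have deriv: "(g k has_real_derivative g' k t) (at t within {0..})" if "t \<ge> 0" for k t
    proof -
      have dPx: "((\<lambda>t. P *v x t) has_vector_derivative P *v Fx t) (at t within {0..})"
        by (rule bounded_linear.has_vector_derivative[OF matrix_vector_mul_bounded_linear dx[OF that]])
      have a: "(elo has_vector_derivative (P *v Fx t - Flo t)) (at t within {0..})"
        unfolding elo_def by (rule has_vector_derivative_diff[OF dPx dlo[OF that]])
      have b: "(ehi has_vector_derivative (Fhi t - P *v Fx t)) (at t within {0..})"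
        unfolding ehi_def by (rule has_vector_derivative_diff[OF dhi[OF that] dPx])
      show ?thesis
      proof (cases "fst k")
        case True
        then show ?thesis unfolding g_def g'_def has_real_derivative_iff_has_vector_derivative
          using bounded_linear.has_vector_derivative[OF bounded_linear_vec_nth a, of "snd k"]
          by (simp add: case_prod_beta)
      next
        case False
        then show ?thesis unfolding g_def g'_def has_real_derivative_iff_has_vector_derivative
          using bounded_linear.has_vector_derivative[OF bounded_linear_vec_nth b, of "snd k"]
          by (simp add: case_prod_beta)
      qed
    qed
    have R0: "R \<ge> 0" unfolding R_def by (intro sum_nonneg) auto
    have rowR: "(\<Sum>j\<in>UNIV. \<bar>Qup td Q $ i $ j\<bar> + \<bar>Qdown td Q $ i $ j\<bar>) \<le> R" for i
      unfolding R_def by (rule member_le_sum) (auto intro: sum_nonneg)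
    have ineq: "g' k t \<ge> -R*c"
      if t: "t \<ge> 0" and c: "c \<ge> 0" and all: "\<forall>j. g j t \<ge> -c" and gk: "g k t = -c" for k t c
    proof -
      have tT: "t \<in> time_set td" using t ts by simp
      have alo: "\<forall>j. elo t $ j \<ge> -c" and ahi: "\<forall>j. ehi t $ j \<ge> -c"
        using all[rule_format, of "(True, _)"] all[rule_format, of "(False, _)"]
        by (auto simp: g_def)
      obtain b i where k: "k = (b, i)" by force
      have mono: "-(\<Sum>j\<in>UNIV. \<bar>Qup td Q $ i $ j\<bar> + \<bar>Qdown td Q $ i $ j\<bar>) * c \<ge> -R*c"
        using rowR[of i] c by (simp add: mult_right_mono)
      show ?thesis
      proof (cases b)
        case True
        have "elo t $ i = -c" using gk k True by (simp add: g_def)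
        from metz_bound[of "Qup td Q" "Qdown td Q", OF Qup_offdiag Qdown_nonneg alo ahi this c]
        have "(Qup td Q *v elo t)$i + (Qdown td Q *v ehi t)$i \<ge> -R*c" using mono by linarith
        moreover have "rlo t $ i \<ge> 0" using rlo_nn[OF tT] by (simp add: vec_nonneg_iff)
        moreover have "(P *v Fx t - Flo t) $ i = (Qup td Q *v elo t)$i + (Qdown td Q *v ehi t)$i + rlo t $ i"
          using idlo[OF tT] by simp
        ultimately show ?thesis using k True by (simp add: g'_def del: vector_minus_component)
      next
        case False
        have "ehi t $ i = -c" using gk k False by (simp add: g_def)
        from metz_bound[of "Qup td Q" "Qdown td Q", OF Qup_offdiag Qdown_nonneg ahi alo this c]
        have "(Qup td Q *v ehi t)$i + (Qdown td Q *v elo t)$i \<ge> -R*c" using mono by linarith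
        moreover have "rhi t $ i \<ge> 0" using rhi_nn[OF tT] by (simp add: vec_nonneg_iff)
        moreover have "(Fhi t - P *v Fx t) $ i = (Qup td Q *v ehi t)$i + (Qdown td Q *v elo t)$i + rhi t $ i"
          using idhi[OF tT] by simp
        ultimately show ?thesis using k False by (simp add: g'_def del: vector_minus_component)
      qed
    qed
    have g0: "g k 0 \<ge> 0" for k
      using init by (auto simp: g_def vec_nonneg_iff)
    have t0: "t \<ge> 0" using that ts by simp
    have gk: "g k t \<ge> 0" for k
      by (rule pos_invariance[of g g' R, OF deriv R0 ineq g0 t0]) auto
    have "elo t $ i \<ge> 0" for i using gk[of "(True, i)"] by (simp add: g_def)
    moreover have "ehi t $ i \<ge> 0" for i using gk[of "(False, i)"] by (simp add: g_def)
    ultimately show ?thesis by (simp add: vec_nonneg_iff)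
  qed
  have injP: "inj ((*v) P)" using rankP full_rank_injective by blast
  show ?thesis
  proof
    fix t assume tT: "t \<in> time_set td"
    have e: "0 \<le> elo t" "0 \<le> ehi t" using nonneg[OF tT] by auto
    have z1: "z_lo t \<le> P *v x t" and z2: "P *v x t \<le> z_hi t"
      using e by (simp_all add: elo_def ehi_def vec_sub_nonneg)
    have v1: "v_lo \<le> v t" "v t \<le> v_hi" using vb tT by auto
    have yt: "y t = C *v x t + D *v u t + V *v v t" using outp tT by auto
    have c1: "c_lo C D V v_lo v_hi (y t) (u t) \<le> C *v x t"
      using interval_upper[OF v1, of V] by (simp add: c_lo_def yt less_eq_vec_def) (smt (verit))
    have c2: "C *v x t \<le> c_hi C D V v_lo v_hi (y t) (u t)"
      using interval_lower[OF v1, of V] by (simp add: c_hi_def yt less_eq_vec_def) (smt (verit))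
    show "z_lo t \<le> P *v x t \<and> P *v x t \<le> z_hi t \<and>
           x t \<in> XP P C (z_lo t) (z_hi t) (c_lo C D V v_lo v_hi (y t) (u t)) (c_hi C D V v_lo v_hi (y t) (u t)) \<and>
           XP P C (z_lo t) (z_hi t) (c_lo C D V v_lo v_hi (y t) (u t)) (c_hi C D V v_lo v_hi (y t) (u t))
             \<subseteq> XI P C (z_lo t) (z_hi t) (c_lo C D V v_lo v_hi (y t) (u t)) (c_hi C D V v_lo v_hi (y t) (u t))"
      using z1 z2 c1 c2 XP_XI[OF injP] by (simp add: XP_def)
  qed
qed

end
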